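(* Let $A$ be a bounded linear operator on a complex Hilbert space $\mathcal{H}$. For $t \in [0,2\pi)$ put $A_t = e^{it}A$, $H_t = \frac{1}{2}(A_t + A_t^* )$, $J_t = \frac{1}{2i}(A_t - A_t^* )$, and \[ b_x(t) = \sup_{\|x\|=1}\langle H_t x, x\rangle - \inf_{\|x\|=1}\langle H_t x, x\rangle,\qquad b_y(t) = \sup_{\|x\|=1}\langle J_t x, x\rangle - \inf_{\|x\|=1}\langle J_t x, x\rangle . \] Then \[ \|A^*A - AA^*\| \le \min_{t \in [0,2\pi)} \{ b_x(t)\, b_y(t) \}. \]
   Context: $b_x(t)$ and $b_y(t)$ are the widths of the numerical range $W(e^{it}A)=\{\langle e^{it}Ax,x\rangle : \|x\|=1\}$ in the directions of the real and imaginary axes respectively. *)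

theory Defs
  imports "HOL-Analysis.Analysis"
begin

text \<open>The inner product is linear in the first argument and
conjugate-linear in the second; the norm is the one induced by the inner product.\<close>

class complex_inner = real_normed_vector +
  fixes scaleC :: "complex \<Rightarrow> 'a \<Rightarrow> 'a" (infixr \<open>*\<^sub>C\<close> 75)
    and cinner :: "'a \<Rightarrow> 'a \<Rightarrow> complex"
  assumes scaleC_add_right: "a *\<^sub>C (x + y) = a *\<^sub>C x + a *\<^sub>C y"
    and scaleC_add_left: "(a + b) *\<^sub>C x = a *\<^sub>C x + b *\<^sub>C x"
    and scaleC_scaleC: "a *\<^sub>C (b *\<^sub>C x) = (a * b) *\<^sub>C x"
    and scaleC_one: "1 *\<^sub>C x = x"
    and scaleR_scaleC: "scaleR r x = complex_of_real r *\<^sub>C x"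
    and cinner_conj_commute: "cinner x y = cnj (cinner y x)"
    and cinner_add_left: "cinner (x + y) z = cinner x z + cinner y z"
    and cinner_scaleC_left: "cinner (a *\<^sub>C x) y = a * cinner x y"
    and cinner_self_nonneg: "0 \<le> Re (cinner x x)"
    and cinner_self_eq_zero: "cinner x x = 0 \<longleftrightarrow> x = 0"
    and norm_eq_sqrt_cinner: "norm x = sqrt (Re (cinner x x))"

class chilbert_space = complex_inner + complete_space

definition bounded_clinear_op :: "('a::complex_inner \<Rightarrow> 'a) \<Rightarrow> bool" where
  "bounded_clinear_op A \<longleftrightarrow>
     (\<forall>x y. A (x + y) = A x + A y) \<and> (\<forall>c x. A (c *\<^sub>C x) = c *\<^sub>C A x) \<and>
     (\<exists>K. \<forall>x. norm (A x) \<le> norm x * K)"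

definition cadjoint :: "('a::complex_inner \<Rightarrow> 'a) \<Rightarrow> ('a \<Rightarrow> 'a)" where
  "cadjoint A = (THE B. \<forall>x y. cinner (A x) y = cinner x (B y))"

definition rot_op :: "('a::complex_inner \<Rightarrow> 'a) \<Rightarrow> real \<Rightarrow> 'a \<Rightarrow> 'a" where
  "rot_op A t = (\<lambda>x. exp (\<i> * complex_of_real t) *\<^sub>C A x)"

definition H_op :: "('a::complex_inner \<Rightarrow> 'a) \<Rightarrow> real \<Rightarrow> 'a \<Rightarrow> 'a" where
  "H_op A t = (\<lambda>x. (1 / 2) *\<^sub>C (rot_op A t x + cadjoint (rot_op A t) x))"

definition J_op :: "('a::complex_inner \<Rightarrow> 'a) \<Rightarrow> real \<Rightarrow> 'a \<Rightarrow> 'a" where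
  "J_op A t = (\<lambda>x. (1 / (2 * \<i>)) *\<^sub>C (rot_op A t x - cadjoint (rot_op A t) x))"

text \<open>For selfadjoint \<open>T\<close>, \<open>\<langle>T x, x\<rangle>\<close> is real; we take its real part.\<close>
definition b_x :: "('a::complex_inner \<Rightarrow> 'a) \<Rightarrow> real \<Rightarrow> real" where
  "b_x A t = (SUP x\<in>{x. norm x = 1}. Re (cinner (H_op A t x) x))
           - (INF x\<in>{x. norm x = 1}. Re (cinner (H_op A t x) x))"

definition b_y :: "('a::complex_inner \<Rightarrow> 'a) \<Rightarrow> real \<Rightarrow> real" where
  "b_y A t = (SUP x\<in>{x. norm x = 1}. Re (cinner (J_op A t x) x))
           - (INF x\<in>{x. norm x = 1}. Re (cinner (J_op A t x) x))"

end

theory Submission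
  imports Defs
begin

lemma scaleC_zero_left [simp]: fixes x y z u w :: "'a::complex_inner" shows "0 *\<^sub>C x = 0"
  by (metis add_0 add_cancel_right_right scaleC_add_left)

lemma cinner_add_right: fixes x y z u w :: "'a::complex_inner" shows "cinner x (y + z) = cinner x y + cinner x z"
  by (metis cinner_conj_commute cinner_add_left complex_cnj_add)

lemma cinner_scaleC_right: fixes x y z u w :: "'a::complex_inner" shows "cinner x (a *\<^sub>C y) = cnj a * cinner x y"
  by (metis cinner_conj_commute cinner_scaleC_left complex_cnj_mult)

lemma cinner_zero_left [simp]: fixes x y z u w :: "'a::complex_inner" shows "cinner 0 y = 0"
  by (metis add_0 add_cancel_right_right cinner_add_left)

lemma cinner_zero_right [simp]: fixes x y z u w :: "'a::complex_inner" shows "cinner x 0 = 0"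
  by (metis add_0 add_cancel_right_right cinner_add_right)

lemma cinner_minus_left: fixes x y z u w :: "'a::complex_inner" shows "cinner (- x) y = - cinner x y"
  by (metis cinner_add_left right_minus cinner_zero_left add.commute eq_neg_iff_add_eq_0)

lemma cinner_minus_right: fixes x y z u w :: "'a::complex_inner" shows "cinner x (- y) = - cinner x y"
  by (metis cinner_add_right right_minus cinner_zero_right add.commute eq_neg_iff_add_eq_0)

lemma cinner_diff_left: fixes x y z u w :: "'a::complex_inner" shows "cinner (x - y) z = cinner x z - cinner y z"
  by (metis diff_conv_add_uminus cinner_add_left cinner_minus_left)

lemma cinner_diff_right: fixes x y z u w :: "'a::complex_inner" shows "cinner x (y - z) = cinner x y - cinner x z"
  by (metis diff_conv_add_uminus cinner_add_right cinner_minus_right)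

lemma cinner_self_Im [simp]: fixes x y z u w :: "'a::complex_inner" shows "Im (cinner x x) = 0"
  using cinner_conj_commute[of x x] by (metis cnj.simps(2) neg_equal_zero)

lemma cinner_self_eq: fixes x y z u w :: "'a::complex_inner" shows "cinner x x = complex_of_real ((norm x)\<^sup>2)"
  using cinner_self_nonneg[of x] by (simp add: norm_eq_sqrt_cinner complex_eq_iff)

lemma norm_sq_Re: fixes x y z u w :: "'a::complex_inner" shows "(norm x)\<^sup>2 = Re (cinner x x)"
  using cinner_self_nonneg[of x] by (simp add: norm_eq_sqrt_cinner)

lemma vec_eqI: fixes u w :: "'a::complex_inner" assumes "\<And>y. cinner u y = cinner w y" shows "u = w"
proof -
  have "cinner (u - w) (u - w) = 0" using assms[of "u - w"] by (simp add: cinner_diff_left)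
  thus ?thesis by (metis cinner_self_eq_zero eq_iff_diff_eq_0)
qed

lemma vec_eqI2: fixes u w :: "'a::complex_inner" assumes "\<And>y. cinner y u = cinner y w" shows "u = w"
  by (rule vec_eqI) (metis assms cinner_conj_commute)

lemma norm_scaleC: fixes x y z u w :: "'a::complex_inner" shows "norm (a *\<^sub>C x) = cmod a * norm x"
proof -
  have "(norm (a *\<^sub>C x))\<^sup>2 = (cmod a * norm x)\<^sup>2"
    unfolding norm_sq_Re cinner_scaleC_left cinner_scaleC_right power_mult_distrib
    using cinner_self_eq[of x]
    by (simp add: norm_sq_Re complex_norm_square[symmetric] mult.assoc[symmetric]) (metis cmod_power2 power2_eq_square)
  thus ?thesis by (simp add: power2_eq_iff_nonneg)
qed

lemma cauchy_schwarz: fixes x y z u w :: "'a::complex_inner" shows "cmod (cinner x y) \<le> norm x * norm y"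
proof (cases "y = 0")
  case True thus ?thesis by simp
next
  case False
  define c where "c = cinner x y / complex_of_real ((norm y)\<^sup>2)"
  have ny: "norm y > 0" using False by simp
  have "0 \<le> Re (cinner (x - c *\<^sub>C y) (x - c *\<^sub>C y))" by (rule cinner_self_nonneg)
  also have "cinner (x - c *\<^sub>C y) (x - c *\<^sub>C y) =
     cinner x x - cnj c * cinner x y - c * cinner y x + c * cnj c * cinner y y"
    by (simp add: cinner_diff_left cinner_diff_right cinner_scaleC_left cinner_scaleC_right algebra_simps)
  also have "\<dots> = complex_of_real ((norm x)\<^sup>2 - (cmod (cinner x y))\<^sup>2 / (norm y)\<^sup>2)"
    using ny unfolding c_def cinner_self_eq
    apply (subst cinner_conj_commute[of y x])
    apply (simp add: complex_norm_square field_simps)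
    apply (simp add: complex_eq_iff power2_eq_square)
    apply (metis cmod_power2 power2_eq_square)
    done
  finally have "(cmod (cinner x y))\<^sup>2 \<le> (norm x * norm y)\<^sup>2"
    using ny by (simp add: field_simps power_mult_distrib)
  thus ?thesis by (rule power2_le_imp_le) simp
qed

lemma norm_add_sq: fixes x y z u w :: "'a::complex_inner" shows "(norm (x + y))\<^sup>2 = (norm x)\<^sup>2 + 2 * Re (cinner x y) + (norm y)\<^sup>2"
  unfolding norm_sq_Re
  by (simp add: cinner_add_left cinner_add_right) (subst cinner_conj_commute[of y x], simp)

lemma norm_diff_sq: fixes x y z u w :: "'a::complex_inner" shows "(norm (x - y))\<^sup>2 = (norm x)\<^sup>2 - 2 * Re (cinner x y) + (norm y)\<^sup>2"
  unfolding norm_sq_Re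
  by (simp add: cinner_diff_left cinner_diff_right) (subst cinner_conj_commute[of y x], simp)

lemma scaleR_is_scaleC: fixes x y z u w :: "'a::complex_inner" shows "r *\<^sub>R x = complex_of_real r *\<^sub>C x"
  by (rule scaleR_scaleC)

lemma additive_zero:
  fixes f :: "'a::ab_group_add \<Rightarrow> 'b::ab_group_add"
  assumes add: "\<And>x y. f (x + y) = f x + f y"
  shows "f 0 = (0::'b::ab_group_add)"
proof -
  have h: "f 0 = f 0 + f 0" using add[of 0 0] unfolding add_0_left .
  show ?thesis using h add_cancel_right_right by blast
qed

lemma additive_diff:
  fixes f :: "'a::ab_group_add \<Rightarrow> 'b::ab_group_add"
  assumes add: "\<And>x y. f (x + y) = f x + f y"
  shows "f (x - y) = f x - (f y::'b::ab_group_add)"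
proof -
  have "f x = f (x - y) + f y" using add[of "x - y" y] by simp
  thus ?thesis by (simp add: algebra_simps)
qed

lemma riesz_var:
  fixes f :: "'a::complex_inner \<Rightarrow> complex"
  assumes add: "\<And>x y. f (x + y) = f x + f y"
    and hom: "\<And>a x. f (a *\<^sub>C x) = a * f x"
    and bnd: "\<And>w. cmod (f w) \<le> c * norm w" and c: "c > 0"
    and x1: "norm x = 1" and fx: "f x = complex_of_real c"
  shows "f y = cinner y (complex_of_real c *\<^sub>C x)"
proof -
  have re: "Re (f y) = c * Re (cinner y x)" for y
  proof -
    define E where "E = Re (f y) - c * Re (cinner y x)"
    define D where "D = c\<^sup>2 * (norm y)\<^sup>2 - (cmod (f y))\<^sup>2"
    have D0: "D \<ge> 0"
    proof -
      have "cmod (f y) \<le> c * norm y" by (rule bnd)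
      hence "(cmod (f y))\<^sup>2 \<le> (c * norm y)\<^sup>2" by (simp add: power_mono)
      thus ?thesis unfolding D_def by (simp add: power_mult_distrib)
    qed
    have key: "2 * s * c * E \<le> s\<^sup>2 * D" for s :: real
    proof -
      define w where "w = x + complex_of_real s *\<^sub>C y"
      have fw: "f w = complex_of_real c + complex_of_real s * f y"
        unfolding w_def by (simp add: add hom fx)
      have "cmod (f w) \<le> c * norm w" by (rule bnd)
      hence "(cmod (f w))\<^sup>2 \<le> (c * norm w)\<^sup>2" by (simp add: power_mono)
      moreover have "(cmod (f w))\<^sup>2 = c\<^sup>2 + 2 * s * c * Re (f y) + s\<^sup>2 * (cmod (f y))\<^sup>2"
        unfolding fw cmod_power2 by (simp add: power2_eq_square algebra_simps)
      moreover have "(norm w)\<^sup>2 = 1 + 2 * s * Re (cinner y x) + s\<^sup>2 * (norm y)\<^sup>2"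
      proof -
        have "Re (cinner x y) = Re (cinner y x)"
          by (subst cinner_conj_commute) simp
        thus ?thesis unfolding w_def norm_add_sq
          by (simp add: x1 norm_scaleC cinner_scaleC_right power_mult_distrib)
      qed
      ultimately have le: "(cmod (f w))\<^sup>2 \<le> c\<^sup>2 * (1 + 2 * s * Re (cinner y x) + s\<^sup>2 * (norm y)\<^sup>2)"
        by (simp add: power_mult_distrib)
      have "c\<^sup>2 * (1 + 2 * s * Re (cinner y x) + s\<^sup>2 * (norm y)\<^sup>2) - (c\<^sup>2 + 2 * s * c * Re (f y) + s\<^sup>2 * (cmod (f y))\<^sup>2)
          = s\<^sup>2 * D - 2 * s * c * E"
        unfolding E_def D_def by (simp add: algebra_simps power2_eq_square)
      thus ?thesis using le \<open>(cmod (f w))\<^sup>2 = _\<close> by linarith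
    qed
    have "c * E = 0"
    proof (rule ccontr)
      assume ne: "c * E \<noteq> 0"
      define a where "a = c * E"
      define s where "s = a / (D + 1)"
      have sD: "s * (D + 1) = a" unfolding s_def using D0 by simp
      have "2 * s * a \<le> s\<^sup>2 * D" using key[of s] unfolding a_def by (simp add: mult.assoc)
      hence "(2 * s * a) * (D + 1)\<^sup>2 \<le> (s\<^sup>2 * D) * (D + 1)\<^sup>2"
        by (rule mult_right_mono) simp
      hence "2 * (s * (D + 1)) * a * (D + 1) \<le> (s * (D + 1))\<^sup>2 * D"
        by (simp add: power2_eq_square algebra_simps)
      hence "2 * a * a * (D + 1) \<le> a * a * D" unfolding sD by (simp add: power2_eq_square)
      hence "a * a * (D + 2) \<le> 0" by (simp add: algebra_simps)
      moreover have "a * a > 0" using ne unfolding a_def by (metis not_real_square_gt_zero)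
      hence "a * a * (D + 2) > 0" using D0 by simp
      ultimately show False by simp
    qed
    thus ?thesis using c unfolding E_def by simp
  qed
  have im: "Im (f y) = c * Im (cinner y x)"
  proof -
    have "Re (f (\<i> *\<^sub>C y)) = c * Re (cinner (\<i> *\<^sub>C y) x)" by (rule re)
    thus ?thesis by (simp add: hom cinner_scaleC_left)
  qed
  show ?thesis using re im by (simp add: cinner_scaleC_right complex_eq_iff)
qed

lemma hom_real:
  fixes f :: "'a::complex_inner \<Rightarrow> complex"
  assumes hom: "\<And>a x. f (a *\<^sub>C x) = a * f x"
  shows "f (r *\<^sub>R x) = complex_of_real r * f x"
  by (simp add: scaleR_scaleC hom)

lemma unit_of:
  fixes x :: "'a::complex_inner"
  assumes "x \<noteq> 0"
  shows "norm (complex_of_real (1 / norm x) *\<^sub>C x) = 1"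
  using assms by (simp add: norm_scaleC norm_divide)

lemma riesz:
  fixes f :: "'a::chilbert_space \<Rightarrow> complex"
  assumes add: "\<And>x y. f (x + y) = f x + f y"
    and hom: "\<And>a x. f (a *\<^sub>C x) = a * f x"
    and bnd: "\<And>w. cmod (f w) \<le> K * norm w"
  shows "\<exists>z. \<forall>y. f y = cinner y z"
proof (cases "\<forall>x. f x = 0")
  case True thus ?thesis by (intro exI[of _ 0]) simp
next
  case False
  then obtain x0 where fx0: "f x0 \<noteq> 0" by blast
  have f0: "f 0 = 0" by (rule additive_zero[OF add])
  have x0: "x0 \<noteq> 0" using fx0 f0 by auto
  define S where "S = (\<lambda>x. cmod (f x)) ` {x. norm x = 1}"
  define c where "c = Sup S"
  have bddS: "bdd_above S" unfolding S_def
    by (rule bdd_aboveI[of _ K]) (auto, metis bnd mult.right_neutral)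
  define u0 where "u0 = complex_of_real (1 / norm x0) *\<^sub>C x0"
  have u0: "norm u0 = 1" unfolding u0_def using x0 by (rule unit_of)
  have fu0: "f u0 \<noteq> 0" unfolding u0_def hom using x0 fx0 by simp
  have Sne: "S \<noteq> {}" unfolding S_def using u0 by blast
  have le_c: "cmod (f u) \<le> c" if "norm u = 1" for u
    unfolding c_def S_def using that bddS unfolding S_def by (intro cSup_upper) auto
  have cpos: "c > 0" using le_c[OF u0] fu0 by (meson less_le_trans zero_less_norm_iff)
  have cinv: "c * inverse (real (Suc k)) \<le> c" for k
  proof -
    have "inverse (real (Suc k)) \<le> 1" by (simp add: inverse_le_1_iff)
    thus ?thesis using cpos by (simp add: mult_left_le)
  qed
  have bnd': "cmod (f w) \<le> c * norm w" for w
  proof (cases "w = 0")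
    case True thus ?thesis using f0 by simp
  next
    case False
    define u where "u = complex_of_real (1 / norm w) *\<^sub>C w"
    have u: "norm u = 1" unfolding u_def using False by (rule unit_of)
    have "w = complex_of_real (norm w) *\<^sub>C u"
      unfolding u_def using False by (simp add: scaleC_scaleC scaleC_one flip: of_real_mult)
    hence "f w = complex_of_real (norm w) * f u" using hom by metis
    hence "cmod (f w) = norm w * cmod (f u)" by (simp add: norm_mult)
    also have "\<dots> \<le> norm w * c" using le_c[OF u] by (simp add: mult_left_mono)
    finally show ?thesis by (simp add: mult.commute)
  qed
  have approx: "\<exists>x r. norm x = 1 \<and> f x = complex_of_real r \<and> c - c * inverse (real (Suc n)) < r \<and> r \<le> c" for n
  proof -
    have "c - c * inverse (real (Suc n)) < c" using cpos by simp
    then obtain s where "s \<in> S" "c - c * inverse (real (Suc n)) < s"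
      using less_cSup_iff[OF Sne bddS] unfolding c_def by blast
    then obtain x where x: "norm x = 1" and lt: "c - c * inverse (real (Suc n)) < cmod (f x)"
      unfolding S_def by blast
    have "c * inverse (real (Suc n)) \<le> c" by (rule cinv)
    hence fxnz: "f x \<noteq> 0" using lt by auto
    define v where "v = (cnj (f x) / complex_of_real (cmod (f x))) *\<^sub>C x"
    have "norm v = 1" unfolding v_def using fxnz x by (simp add: norm_scaleC norm_divide)
    moreover have "f v = complex_of_real (cmod (f x))"
    proof -
      have sq: "f x * cnj (f x) = complex_of_real (cmod (f x)) * complex_of_real (cmod (f x))"
        by (metis complex_norm_square power2_eq_square of_real_mult)
      have "f v = (f x * cnj (f x)) / complex_of_real (cmod (f x))"
        unfolding v_def hom by (simp add: field_simps)
      also have "\<dots> = complex_of_real (cmod (f x))" unfolding sq using fxnz by simp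
      finally show ?thesis .
    qed
    ultimately show ?thesis using lt le_c[OF x] by blast
  qed
  have "\<forall>n. \<exists>p. norm (fst p) = 1 \<and> f (fst p) = complex_of_real (snd p) \<and> c - c * inverse (real (Suc n)) < snd p \<and> snd p \<le> c"
    using approx by simp
  then obtain P where P: "\<forall>n. norm (fst (P n)) = 1 \<and> f (fst (P n)) = complex_of_real (snd (P n)) \<and> c - c * inverse (real (Suc n)) < snd (P n) \<and> snd (P n) \<le> c"
    by (rule choice[THEN exE])
  define X where "X n = fst (P n)" for n
  define r where "r n = snd (P n)" for n
  have X: "\<And>n. norm (X n) = 1" and fX: "\<And>n. f (X n) = complex_of_real (r n)"
    and rlow: "\<And>n. c - c * inverse (real (Suc n)) < r n" and rup: "\<And>n. r n \<le> c"
    using P unfolding X_def r_def by auto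
  have rpos: "r n \<ge> 0" for n using rlow[of n] cinv[of n] by linarith
  have "Cauchy X"
  proof (rule metric_CauchyI)
    fix e :: real assume e: "e > 0"
    obtain N :: nat where N: "8 / e\<^sup>2 < real N" using reals_Archimedean2 by blast
    have "dist (X m) (X n) < e" if m: "m \<ge> N" and n: "n \<ge> N" for m n
    proof -
      define d where "d = 2 * inverse (real (Suc N))"
      have d0: "0 \<le> d" "d \<le> 2" unfolding d_def by (auto simp: field_simps)
      have im: "inverse (real (Suc m)) \<le> inverse (real (Suc N))" using m by (simp add: field_simps)
      have in': "inverse (real (Suc n)) \<le> inverse (real (Suc N))" using n by (simp add: field_simps)
      have "c * (2 - d) \<le> r m + r n"
      proof -
        have "c * inverse (real (Suc m)) \<le> c * inverse (real (Suc N))" using im cpos by simp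
        moreover have "c * inverse (real (Suc n)) \<le> c * inverse (real (Suc N))" using in' cpos by simp
        ultimately show ?thesis using rlow[of m] rlow[of n] unfolding d_def by (simp add: algebra_simps)
      qed
      also have "r m + r n = cmod (f (X m + X n))"
      proof -
        have "r m \<ge> 0" "r n \<ge> 0" using rpos by auto
        thus ?thesis by (simp add: add fX flip: of_real_add)
      qed
      also have "\<dots> \<le> c * norm (X m + X n)" by (rule bnd')
      finally have "2 - d \<le> norm (X m + X n)" using cpos by simp
      hence "(2 - d)\<^sup>2 \<le> (norm (X m + X n))\<^sup>2" using d0 by (simp add: power_mono)
      moreover have "(norm (X m - X n))\<^sup>2 = 4 - (norm (X m + X n))\<^sup>2"
        using norm_add_sq[of "X m" "X n"] norm_diff_sq[of "X m" "X n"] X by simp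
      moreover have "(2 - d)\<^sup>2 = 4 - 4 * d + d\<^sup>2" by (simp add: power2_eq_square algebra_simps)
      moreover have "d\<^sup>2 \<ge> 0" by simp
      ultimately have "(norm (X m - X n))\<^sup>2 \<le> 4 * d" by linarith
      also have "4 * d < e\<^sup>2"
      proof -
        have "8 / e\<^sup>2 < real (Suc N)" using N by simp
        hence "8 < e\<^sup>2 * real (Suc N)" using e by (simp add: field_simps)
        thus ?thesis unfolding d_def by (simp add: field_simps)
      qed
      finally have "(norm (X m - X n))\<^sup>2 < e\<^sup>2" .
      hence "norm (X m - X n) < e" by (rule power_less_imp_less_base) (use e in simp)
      thus ?thesis by (simp add: dist_norm)
    qed
    thus "\<exists>N. \<forall>m\<ge>N. \<forall>n\<ge>N. dist (X m) (X n) < e" by blast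
  qed
  then obtain L where XL: "X \<longlonglongrightarrow> L" using Cauchy_convergent_iff convergent_def by blast
  have "(\<lambda>n. norm (X n)) \<longlonglongrightarrow> norm L" using XL by (rule tendsto_norm)
  hence L1: "norm L = 1" using X by (simp add: LIMSEQ_const_iff)
  have "(\<lambda>n. f (X n) - f L) \<longlonglongrightarrow> 0"
  proof (rule Lim_null_comparison)
    show "\<forall>\<^sub>F n in sequentially. norm (f (X n) - f L) \<le> c * norm (X n - L)"
      using bnd' by (simp add: additive_diff[OF add, symmetric])
    have "(\<lambda>n. X n - L) \<longlonglongrightarrow> 0" using XL by (rule LIM_zero)
    hence "(\<lambda>n. norm (X n - L)) \<longlonglongrightarrow> 0" by (rule tendsto_norm_zero)
    thus "(\<lambda>n. c * norm (X n - L)) \<longlonglongrightarrow> 0" by (rule tendsto_mult_right_zero)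
  qed
  hence lim1: "(\<lambda>n. f (X n)) \<longlonglongrightarrow> f L" by (rule LIM_zero_cancel)
  have "r \<longlonglongrightarrow> c"
  proof (rule tendsto_sandwich[of "\<lambda>n. c - c * inverse (real (Suc n))" _ _ "\<lambda>n. c"])
    show "\<forall>\<^sub>F n in sequentially. c - c * inverse (real (Suc n)) \<le> r n" using rlow by (simp add: less_imp_le)
    show "\<forall>\<^sub>F n in sequentially. r n \<le> c" using rup by simp
    show "(\<lambda>n. c) \<longlonglongrightarrow> c" by simp
    have "(\<lambda>n. inverse (real (Suc n))) \<longlonglongrightarrow> 0" by (rule LIMSEQ_inverse_real_of_nat)
    hence "(\<lambda>n. c - c * inverse (real (Suc n))) \<longlonglongrightarrow> c - c * 0"
      by (intro tendsto_intros)
    thus "(\<lambda>n. c - c * inverse (real (Suc n))) \<longlonglongrightarrow> c" by simp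
  qed
  hence "(\<lambda>n. complex_of_real (r n)) \<longlonglongrightarrow> complex_of_real c" by (rule tendsto_of_real)
  hence "(\<lambda>n. f (X n)) \<longlonglongrightarrow> complex_of_real c" using fX by simp
  hence fL: "f L = complex_of_real c" using lim1 LIMSEQ_unique by blast
  show ?thesis
    using riesz_var[OF add hom bnd' cpos L1 fL] by blast
qed

lemma bcl_parts:
  assumes "bounded_clinear_op A"
  obtains K where "\<And>x y. A (x + y) = A x + A y" "\<And>c x. A (c *\<^sub>C x) = c *\<^sub>C A x"
    "\<And>x. norm (A x) \<le> norm x * K"
  using assms unfolding bounded_clinear_op_def by blast

lemma adj_exists:
  fixes A :: "'a::chilbert_space \<Rightarrow> 'a"
  assumes "bounded_clinear_op A"
  shows "\<exists>B. \<forall>y x. cinner (A x) y = cinner x (B y)"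
proof -
  obtain K where addA: "\<And>x y. A (x + y) = A x + A y" and homA: "\<And>c x. A (c *\<^sub>C x) = c *\<^sub>C A x"
    and bA: "\<And>x. norm (A x) \<le> norm x * K" using bcl_parts[OF assms] by blast
  have "\<forall>y. \<exists>z. \<forall>x. cinner (A x) y = cinner x z"
  proof
    fix y
    have "\<exists>z. \<forall>x. cinner (A x) y = cinner x z"
    proof (rule riesz[where K = "K * norm y"])
      show "cinner (A (a + b)) y = cinner (A a) y + cinner (A b) y" for a b
        by (simp add: addA cinner_add_left)
      show "cinner (A (c *\<^sub>C a)) y = c * cinner (A a) y" for c a
        by (simp add: homA cinner_scaleC_left)
      show "cmod (cinner (A w) y) \<le> K * norm y * norm w" for w
      proof -
        have "cmod (cinner (A w) y) \<le> norm (A w) * norm y" by (rule cauchy_schwarz)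
        also have "\<dots> \<le> norm w * K * norm y" using bA[of w] by (simp add: mult_right_mono)
        finally show ?thesis by (simp add: algebra_simps)
      qed
    qed
    thus "\<exists>z. \<forall>x. cinner (A x) y = cinner x z" .
  qed
  thus ?thesis by (rule choice)
qed

lemma adj_unique:
  fixes A :: "'a::complex_inner \<Rightarrow> 'a"
  assumes "\<And>x y. cinner (A x) y = cinner x (B y)"
  shows "cadjoint A = B"
  unfolding cadjoint_def
proof (rule the_equality)
  show "\<forall>x y. cinner (A x) y = cinner x (B y)" using assms by blast
  fix B' assume h: "\<forall>x y. cinner (A x) y = cinner x (B' y)"
  show "B' = B"
  proof
    fix y show "B' y = B y" by (rule vec_eqI2) (metis h assms)
  qed
qed

lemma adj:
  fixes A :: "'a::chilbert_space \<Rightarrow> 'a"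
  assumes "bounded_clinear_op A"
  shows "cinner (A x) y = cinner x (cadjoint A y)"
proof -
  obtain B where B: "\<forall>y x. cinner (A x) y = cinner x (B y)" using adj_exists[OF assms] by blast
  have "cadjoint A = B" by (rule adj_unique) (use B in blast)
  thus ?thesis using B by simp
qed

definition sa_op :: "('a::complex_inner \<Rightarrow> 'a) \<Rightarrow> bool" where
  "sa_op S \<longleftrightarrow> (\<forall>x y. S (x + y) = S x + S y) \<and> (\<forall>c x. S (c *\<^sub>C x) = c *\<^sub>C S x) \<and>
     (\<forall>x y. cinner (S x) y = cinner x (S y))"

lemma sa_real:
  assumes "sa_op S" shows "Im (cinner (S x) x) = 0"
proof -
  have "cinner (S x) x = cinner x (S x)" using assms unfolding sa_op_def by blast
  also have "\<dots> = cnj (cinner (S x) x)" by (rule cinner_conj_commute)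
  finally show ?thesis by (metis cnj.simps(2) neg_equal_zero)
qed

lemma numrad:
  fixes S :: "'a::complex_inner \<Rightarrow> 'a"
  assumes sa: "sa_op S" and bnd: "\<And>u. norm u = 1 \<Longrightarrow> \<bar>Re (cinner (S u) u)\<bar> \<le> r" and r: "r \<ge> 0"
  shows "norm (S x) \<le> r * norm x"
proof -
  have add: "\<And>x y. S (x + y) = S x + S y" and hom: "\<And>c x. S (c *\<^sub>C x) = c *\<^sub>C S x"
    and adj: "\<And>x y. cinner (S x) y = cinner x (S y)" using sa unfolding sa_op_def by blast+
  have S0: "S 0 = 0" by (rule additive_zero[OF add])
  have gen: "\<bar>Re (cinner (S x) x)\<bar> \<le> r * (norm x)\<^sup>2" for x
  proof (cases "x = 0")
    case True thus ?thesis using S0 by simp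
  next
    case False
    define u where "u = complex_of_real (1 / norm x) *\<^sub>C x"
    have u: "norm u = 1" unfolding u_def using False by (rule unit_of)
    have xu: "x = complex_of_real (norm x) *\<^sub>C u"
      unfolding u_def using False by (simp add: scaleC_scaleC scaleC_one flip: of_real_mult)
    have "cinner (S x) x = complex_of_real ((norm x)\<^sup>2) * cinner (S u) u"
      by (subst (1 2) xu) (simp add: hom cinner_scaleC_left cinner_scaleC_right power2_eq_square)
    hence "\<bar>Re (cinner (S x) x)\<bar> = (norm x)\<^sup>2 * \<bar>Re (cinner (S u) u)\<bar>" by (simp add: abs_mult)
    also have "\<dots> \<le> (norm x)\<^sup>2 * r" using bnd[OF u] by (simp add: mult_left_mono)
    finally show ?thesis by (simp add: mult.commute)
  qed
  have pol: "4 * Re (cinner (S x) y) \<le> 2 * r * ((norm x)\<^sup>2 + (norm y)\<^sup>2)" for x y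
  proof -
    have Sd: "S (x - y) = S x - S y" by (rule additive_diff[OF add])
    have c1: "Re (cinner (S y) x) = Re (cinner (S x) y)"
      by (metis adj cinner_conj_commute cnj.simps(1))
    have "Re (cinner (S (x + y)) (x + y)) - Re (cinner (S (x - y)) (x - y)) = 4 * Re (cinner (S x) y)"
      using c1 by (simp add: add Sd cinner_add_left cinner_add_right cinner_diff_left cinner_diff_right)
    moreover have "Re (cinner (S (x + y)) (x + y)) \<le> r * (norm (x + y))\<^sup>2" using gen[of "x + y"] by simp
    moreover have "- Re (cinner (S (x - y)) (x - y)) \<le> r * (norm (x - y))\<^sup>2" using gen[of "x - y"] by simp
    moreover have "(norm (x + y))\<^sup>2 + (norm (x - y))\<^sup>2 = 2 * ((norm x)\<^sup>2 + (norm y)\<^sup>2)"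
      using norm_add_sq[of x y] norm_diff_sq[of x y] by simp
    ultimately show ?thesis by (simp add: algebra_simps) (smt (verit) distrib_left)
  qed
  show ?thesis
  proof (cases "S x = 0")
    case True thus ?thesis using r by simp
  next
    case False
    hence x0: "x \<noteq> 0" using S0 by auto
    define s where "s = norm x / norm (S x)"
    have sp: "s > 0" unfolding s_def using False x0 by simp
    have ss: "s * norm (S x) = norm x" unfolding s_def using False by simp
    have "4 * Re (cinner (S x) (complex_of_real s *\<^sub>C S x)) \<le> 2 * r * ((norm x)\<^sup>2 + (norm (complex_of_real s *\<^sub>C S x))\<^sup>2)"
      by (rule pol)
    moreover have "Re (cinner (S x) (complex_of_real s *\<^sub>C S x)) = s * (norm (S x))\<^sup>2"
      by (simp add: cinner_scaleC_right norm_sq_Re)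
    moreover have "(norm (complex_of_real s *\<^sub>C S x))\<^sup>2 = (norm x)\<^sup>2"
      using ss sp by (simp add: norm_scaleC power_mult_distrib[symmetric])
    ultimately have "4 * s * (norm (S x))\<^sup>2 \<le> 4 * r * (norm x)\<^sup>2" by simp
    hence "4 * (norm x) * norm (S x) \<le> 4 * r * ((norm x) * norm x)"
      using ss by (simp add: power2_eq_square mult.assoc[symmetric])
    hence "norm (S x) \<le> r * norm x" using x0 by (simp add: mult.assoc mult.left_commute[of r])
    thus ?thesis .
  qed
qed

lemma HJ:
  fixes B Bs :: "'a::complex_inner \<Rightarrow> 'a"
  assumes addB: "\<And>x y. B (x + y) = B x + B y" and homB: "\<And>c x. B (c *\<^sub>C x) = c *\<^sub>C B x"
    and addBs: "\<And>x y. Bs (x + y) = Bs x + Bs y" and homBs: "\<And>c x. Bs (c *\<^sub>C x) = c *\<^sub>C Bs x"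
    and adjB: "\<And>x y. cinner (B x) y = cinner x (Bs y)"
  defines "H \<equiv> \<lambda>x. (1/2) *\<^sub>C (B x + Bs x)" and "J \<equiv> \<lambda>x. (1 / (2 * \<i>)) *\<^sub>C (B x - Bs x)"
  shows "sa_op H" "sa_op J" "Re (cinner (H x) x) = Re (cinner (B x) x)"
    "Re (cinner (J x) x) = Im (cinner (B x) x)"
    "(norm (B x))\<^sup>2 - (norm (Bs x))\<^sup>2 = 4 * Re (cinner (H x) (\<i> *\<^sub>C J x))"
proof -
  have adjBs: "cinner (Bs x) y = cinner x (B y)" for x y
    by (metis adjB cinner_conj_commute)
  show "sa_op H" unfolding sa_op_def
  proof (intro conjI allI)
    fix x y show "H (x + y) = H x + H y"
      by (rule vec_eqI) (simp add: H_def addB addBs cinner_add_left cinner_scaleC_left algebra_simps)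
  next
    fix c x show "H (c *\<^sub>C x) = c *\<^sub>C H x"
      by (rule vec_eqI) (simp add: H_def homB homBs cinner_add_left cinner_scaleC_left algebra_simps)
  next
    fix x y show "cinner (H x) y = cinner x (H y)"
      by (simp add: H_def cinner_add_left cinner_scaleC_left cinner_add_right cinner_scaleC_right adjB adjBs algebra_simps)
  qed
  show "sa_op J" unfolding sa_op_def
  proof (intro conjI allI)
    fix x y show "J (x + y) = J x + J y"
      by (rule vec_eqI) (simp add: J_def addB addBs cinner_add_left cinner_diff_left cinner_scaleC_left algebra_simps)
  next
    fix c x show "J (c *\<^sub>C x) = c *\<^sub>C J x"
      by (rule vec_eqI) (simp add: J_def homB homBs cinner_add_left cinner_diff_left cinner_scaleC_left algebra_simps)
  next
    fix x y show "cinner (J x) y = cinner x (J y)"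
      by (simp add: J_def cinner_diff_left cinner_scaleC_left cinner_diff_right cinner_scaleC_right adjB adjBs field_simps)
  qed
  have q: "cinner (Bs x) x = cnj (cinner (B x) x)"
    by (metis adjBs cinner_conj_commute)
  show "Re (cinner (H x) x) = Re (cinner (B x) x)"
    by (simp add: H_def cinner_add_left cinner_scaleC_left q)
  show "Re (cinner (J x) x) = Im (cinner (B x) x)"
    by (simp add: J_def cinner_diff_left cinner_scaleC_left q complex_diff_cnj field_simps)
  have r: "Re (cinner (Bs x) (B x)) = Re (cinner (B x) (Bs x))"
    by (metis cinner_conj_commute cnj.simps(1))
  show "(norm (B x))\<^sup>2 - (norm (Bs x))\<^sup>2 = 4 * Re (cinner (H x) (\<i> *\<^sub>C J x))"
  proof -
    have iJ: "\<i> *\<^sub>C J x = complex_of_real (1/2) *\<^sub>C (B x - Bs x)"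
      unfolding J_def by (simp add: scaleC_scaleC)
    have H': "H x = complex_of_real (1/2) *\<^sub>C (B x + Bs x)" unfolding H_def by simp
    show ?thesis unfolding iJ H'
      using r by (simp add: norm_sq_Re cinner_add_left cinner_diff_right cinner_scaleC_left cinner_scaleC_right cinner_add_right cinner_diff_left algebra_simps)
  qed
qed


lemma sa_shift:
  assumes "sa_op S" shows "sa_op (\<lambda>x. S x - complex_of_real a *\<^sub>C x)"
proof -
  have add: "\<And>x y. S (x + y) = S x + S y" and hom: "\<And>c x. S (c *\<^sub>C x) = c *\<^sub>C S x"
    and adj: "\<And>x y. cinner (S x) y = cinner x (S y)" using assms unfolding sa_op_def by blast+
  show ?thesis unfolding sa_op_def
  proof (intro conjI allI)
    fix x y show "S (x + y) - complex_of_real a *\<^sub>C (x + y) = (S x - complex_of_real a *\<^sub>C x) + (S y - complex_of_real a *\<^sub>C y)"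
      by (rule vec_eqI) (simp add: add cinner_add_left cinner_diff_left cinner_scaleC_left algebra_simps)
  next
    fix c x show "S (c *\<^sub>C x) - complex_of_real a *\<^sub>C (c *\<^sub>C x) = c *\<^sub>C (S x - complex_of_real a *\<^sub>C x)"
      by (rule vec_eqI) (simp add: hom cinner_add_left cinner_diff_left cinner_scaleC_left algebra_simps)
  next
    fix x y show "cinner (S x - complex_of_real a *\<^sub>C x) y = cinner x (S y - complex_of_real a *\<^sub>C y)"
      by (simp add: adj cinner_diff_left cinner_diff_right cinner_scaleC_left cinner_scaleC_right)
  qed
qed

lemma sup_inf_shift:
  fixes g :: "'a \<Rightarrow> real"
  assumes ne: "U \<noteq> {}" and bd: "\<And>x. x \<in> U \<Longrightarrow> \<bar>g x\<bar> \<le> K"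
  shows "(SUP x\<in>U. g x) - (INF x\<in>U. g x) \<ge> 0"
    and "x \<in> U \<Longrightarrow> \<bar>g x - ((SUP x\<in>U. g x) + (INF x\<in>U. g x)) / 2\<bar> \<le> ((SUP x\<in>U. g x) - (INF x\<in>U. g x)) / 2"
proof -
  have ba: "bdd_above (g ` U)" by (rule bdd_aboveI2[where M=K]) (use bd in force)
  have bb: "bdd_below (g ` U)" by (rule bdd_belowI2[where m="-K"]) (use bd in force)
  have up: "g y \<le> (SUP x\<in>U. g x)" if "y \<in> U" for y using that ba by (rule cSUP_upper)
  have lo: "(INF x\<in>U. g x) \<le> g y" if "y \<in> U" for y using bb that by (rule cINF_lower)
  obtain y where "y \<in> U" using ne by blast
  from up[OF this] lo[OF this] show "(SUP x\<in>U. g x) - (INF x\<in>U. g x) \<ge> 0" by linarith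
  assume "x \<in> U"
  from up[OF this] lo[OF this]
  show "\<bar>g x - ((SUP x\<in>U. g x) + (INF x\<in>U. g x)) / 2\<bar> \<le> ((SUP x\<in>U. g x) - (INF x\<in>U. g x)) / 2"
    by (simp add: abs_le_iff field_simps)
qed

theorem proposition3:
  fixes A :: "'a::chilbert_space \<Rightarrow> 'a"
  assumes "bounded_clinear_op A"
    and "\<exists>x::'a. x \<noteq> 0"
  shows "\<forall>t\<in>{0..<2*pi}.
           onorm (\<lambda>x. cadjoint A (A x) - A (cadjoint A x)) \<le> b_x A t * b_y A t"
proof
  fix t :: real
  obtain K where addA: "\<And>x y. A (x + y) = A x + A y" and homA: "\<And>c x. A (c *\<^sub>C x) = c *\<^sub>C A x"
    and bA: "\<And>x. norm (A x) \<le> norm x * K" using bcl_parts[OF assms(1)] by blast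
  define As where "As = cadjoint A"
  have adjA: "\<And>x y. cinner (A x) y = cinner x (As y)" unfolding As_def by (rule adj[OF assms(1)])
  have adjAs: "\<And>x y. cinner (As x) y = cinner x (A y)" by (metis adjA cinner_conj_commute)
  have addAs: "As (x + y) = As x + As y" for x y
    by (rule vec_eqI2) (simp add: cinner_add_right adjA[symmetric] addA cinner_add_left)
  have homAs: "As (c *\<^sub>C x) = c *\<^sub>C As x" for c x
    by (rule vec_eqI2) (simp add: cinner_scaleC_right adjA[symmetric])
  define e where "e = exp (\<i> * complex_of_real t)"
  have ce: "cmod e = 1" unfolding e_def by (simp add: norm_exp_i_times)
  define B where "B = rot_op A t"
  have Bx: "B x = e *\<^sub>C A x" for x by (simp add: B_def rot_op_def e_def)
  define Bs where "Bs = (\<lambda>y. cnj e *\<^sub>C As y)"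
  have adjB: "cinner (B x) y = cinner x (Bs y)" for x y
    by (simp add: Bx Bs_def cinner_scaleC_left cinner_scaleC_right adjA)
  have cadB: "cadjoint B = Bs" by (rule adj_unique) (rule adjB)
  have addB: "B (x + y) = B x + B y" for x y by (simp add: Bx addA scaleC_add_right)
  have homB: "B (c *\<^sub>C x) = c *\<^sub>C B x" for c x by (simp add: Bx homA scaleC_scaleC mult.commute)
  have addBs: "Bs (x + y) = Bs x + Bs y" for x y by (simp add: Bs_def addAs scaleC_add_right)
  have homBs: "Bs (c *\<^sub>C x) = c *\<^sub>C Bs x" for c x by (simp add: Bs_def homAs scaleC_scaleC mult.commute)
  define H where "H = (\<lambda>x. (1/2) *\<^sub>C (B x + Bs x))"
  define J where "J = (\<lambda>x. (1 / (2 * \<i>)) *\<^sub>C (B x - Bs x))"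
  note HJ' = HJ[OF addB homB addBs homBs adjB, folded H_def J_def]
  have Hop: "H_op A t = H" unfolding H_op_def H_def B_def[symmetric] cadB ..
  have Jop: "J_op A t = J" unfolding J_op_def J_def B_def[symmetric] cadB ..
  define U where "U = {x::'a. norm x = 1}"
  have Une: "U \<noteq> {}"
  proof -
    obtain x0 :: 'a where "x0 \<noteq> 0" using assms(2) by blast
    thus ?thesis unfolding U_def using unit_of by blast
  qed
  have bq: "cmod (cinner (B x) x) \<le> K" if "x \<in> U" for x
  proof -
    have "cmod (cinner (B x) x) \<le> norm (B x) * norm x" by (rule cauchy_schwarz)
    also have "\<dots> = norm (A x)" using that ce unfolding U_def by (simp add: Bx norm_scaleC)
    also have "\<dots> \<le> K" using bA[of x] that unfolding U_def by simp
    finally show ?thesis .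
  qed
  have bH: "\<bar>Re (cinner (H x) x)\<bar> \<le> K" if "x \<in> U" for x
    using HJ'(3)[of x] bq[OF that] abs_Re_le_cmod[of "cinner (B x) x"] unfolding H_def by simp
  have bJ: "\<bar>Re (cinner (J x) x)\<bar> \<le> K" if "x \<in> U" for x
    using HJ'(4)[of x] bq[OF that] abs_Im_le_cmod[of "cinner (B x) x"] unfolding J_def by simp
  have bx: "b_x A t = (SUP x\<in>U. Re (cinner (H x) x)) - (INF x\<in>U. Re (cinner (H x) x))"
    unfolding b_x_def Hop U_def ..
  have by': "b_y A t = (SUP x\<in>U. Re (cinner (J x) x)) - (INF x\<in>U. Re (cinner (J x) x))"
    unfolding b_y_def Jop U_def ..
  define \<alpha> where "\<alpha> = ((SUP x\<in>U. Re (cinner (H x) x)) + (INF x\<in>U. Re (cinner (H x) x))) / 2"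
  define \<beta> where "\<beta> = ((SUP x\<in>U. Re (cinner (J x) x)) + (INF x\<in>U. Re (cinner (J x) x))) / 2"
  have bx0: "b_x A t \<ge> 0" unfolding bx by (rule sup_inf_shift(1)[OF Une bH])
  have by0: "b_y A t \<ge> 0" unfolding by' by (rule sup_inf_shift(1)[OF Une bJ])
  have sH: "\<bar>Re (cinner (H x) x) - \<alpha>\<bar> \<le> b_x A t / 2" if "x \<in> U" for x
    unfolding bx \<alpha>_def by (rule sup_inf_shift(2)[OF Une bH that])
  have sJ: "\<bar>Re (cinner (J x) x) - \<beta>\<bar> \<le> b_y A t / 2" if "x \<in> U" for x
    unfolding by' \<beta>_def by (rule sup_inf_shift(2)[OF Une bJ that])
  define H' where "H' = (\<lambda>x. H x - complex_of_real \<alpha> *\<^sub>C x)"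
  define J' where "J' = (\<lambda>x. J x - complex_of_real \<beta> *\<^sub>C x)"
  have saH': "sa_op H'" unfolding H'_def by (rule sa_shift[OF HJ'(1)])
  have saJ': "sa_op J'" unfolding J'_def by (rule sa_shift[OF HJ'(2)])
  have unitRe: "Re (cinner u u) = 1" if "norm u = 1" for u :: 'a using that norm_sq_Re[of u] by simp
  have nH': "norm (H' x) \<le> b_x A t / 2 * norm x" for x
  proof (rule numrad[OF saH'])
    fix u :: 'a assume u: "norm u = 1"
    show "\<bar>Re (cinner (H' u) u)\<bar> \<le> b_x A t / 2"
      using sH[of u] u unitRe[OF u] unfolding U_def H'_def by (simp add: cinner_diff_left cinner_scaleC_left)
  qed (use bx0 in simp)
  have nJ': "norm (J' x) \<le> b_y A t / 2 * norm x" for x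
  proof (rule numrad[OF saJ'])
    fix u :: 'a assume u: "norm u = 1"
    show "\<bar>Re (cinner (J' u) u)\<bar> \<le> b_y A t / 2"
      using sJ[of u] u unitRe[OF u] unfolding U_def J'_def by (simp add: cinner_diff_left cinner_scaleC_left)
  qed (use by0 in simp)
  define C where "C = (\<lambda>x. As (A x) - A (As x))"
  have saC: "sa_op C" unfolding sa_op_def C_def
  proof (intro conjI allI)
    fix x y show "As (A (x + y)) - A (As (x + y)) = As (A x) - A (As x) + (As (A y) - A (As y))"
      by (simp add: addA addAs algebra_simps)
  next
    fix c x show "As (A (c *\<^sub>C x)) - A (As (c *\<^sub>C x)) = c *\<^sub>C (As (A x) - A (As x))"
      by (rule vec_eqI) (simp add: homA homAs cinner_diff_left cinner_scaleC_left algebra_simps)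
  next
    fix x y show "cinner (As (A x) - A (As x)) y = cinner x (As (A y) - A (As y))"
      by (simp add: cinner_diff_left cinner_diff_right adjA adjAs)
  qed
  have key: "\<bar>Re (cinner (C x) x)\<bar> \<le> b_x A t * b_y A t" if u: "norm x = 1" for x
  proof -
    have f1: "cinner (As (A x)) x = cinner (A x) (A x)" by (rule adjAs)
    have f2: "cinner (A (As x)) x = cinner (As x) (As x)" by (rule adjA)
    have "Re (cinner (C x) x) = (norm (A x))\<^sup>2 - (norm (As x))\<^sup>2"
      unfolding C_def cinner_diff_left f1 f2 norm_sq_Re by simp
    also have "\<dots> = (norm (B x))\<^sup>2 - (norm (Bs x))\<^sup>2"
      using ce by (simp add: Bx Bs_def norm_scaleC)
    also have "\<dots> = 4 * Re (cinner (H x) (\<i> *\<^sub>C J x))" using HJ'(5)[of x] unfolding H_def J_def by simp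
    also have "Re (cinner (H x) (\<i> *\<^sub>C J x)) = Re (cinner (H' x) (\<i> *\<^sub>C J' x))"
    proof -
      have i1: "Im (cinner (H x) x) = 0" by (rule sa_real[OF HJ'(1)])
      have i2: "Im (cinner x (J x)) = 0"
        using sa_real[OF HJ'(2), of x] by (subst cinner_conj_commute) simp
      have i3: "Im (cinner x x) = 0" by simp
      show ?thesis using i1 i2 i3 unfolding H'_def J'_def
        by (simp add: cinner_diff_left cinner_diff_right cinner_scaleC_left cinner_scaleC_right algebra_simps)
    qed
    finally have eq: "Re (cinner (C x) x) = 4 * Re (cinner (H' x) (\<i> *\<^sub>C J' x))" .
    have "\<bar>Re (cinner (H' x) (\<i> *\<^sub>C J' x))\<bar> \<le> cmod (cinner (H' x) (\<i> *\<^sub>C J' x))" by (rule abs_Re_le_cmod)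
    also have "\<dots> \<le> norm (H' x) * norm (\<i> *\<^sub>C J' x)" by (rule cauchy_schwarz)
    also have "\<dots> = norm (H' x) * norm (J' x)" by (simp add: norm_scaleC)
    also have "\<dots> \<le> (b_x A t / 2) * (b_y A t / 2)"
      using nH'[of x] nJ'[of x] u bx0 by (intro mult_mono) simp_all
    finally show ?thesis unfolding eq by simp
  qed
  have nC: "norm (C x) \<le> (b_x A t * b_y A t) * norm x" for x
    by (rule numrad[OF saC key]) (use bx0 by0 in simp_all)
  have "onorm C \<le> b_x A t * b_y A t" by (rule onorm_bound) (use bx0 by0 nC in simp_all)
  thus "onorm (\<lambda>x. cadjoint A (A x) - A (cadjoint A x)) \<le> b_x A t * b_y A t"
    unfolding C_def As_def .
qed

end
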